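(* Let $n>0$ and $i_1,\dots,i_5\in\{0,1\}$, and suppose $\alpha=i_1^{(n)}i_2^{(n)}i_3^{(n)}i_4^{(n)}i_5^{(n)}\in\mathcal{L}^*(E_{\mathbb{Z}})$. Then $\alpha$ can be written in one and only one of the forms $$i_1^{(n+1)}i_3^{(n+1)}i_5^{(n)}\qquad\text{or}\qquad i_1^{(n)}i_2^{(n+1)}i_4^{(n+1)}.$$
   Context: The two-sided Thue--Morse sequence $\omega=(\omega_k)_{k\in\mathbb{Z}}$ over $\{0,1\}$ is defined by $\omega_0=0$, $\omega_{2^n+j}=1-\omega_j$ for $n\ge0$, $0\le j<2^n$, and $\omega_{-i}=\omega_{i-1}$ for $i\ge1$. $\mathcal{L}^*(E_{\mathbb{Z}})$ denotes the set of finite nonempty words occurring in $\omega$. Blocks $i^{(n)}$: $0^{(0)}=0$, $1^{(0)}=1$, and inductively $0^{(n)}=0^{(n-1)}1^{(n-1)}$, $1^{(n)}=1^{(n-1)}0^{(n-1)}$ (concatenation); $|i^{(n)}|=2^n$. *)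

theory Defs
  imports Main
begin

definition top_exp :: "nat \<Rightarrow> nat" where
  "top_exp k = (GREATEST n. 2 ^ n \<le> k)"

lemma top_exp_props:
  assumes "k > 0"
  shows "2 ^ top_exp k \<le> k"
proof -
  have b: "\<forall>n. 2 ^ n \<le> k \<longrightarrow> n \<le> k"
    by (metis dual_order.trans less_exp less_imp_le)
  have "2 ^ (0::nat) \<le> k" using assms by simp
  then show ?thesis unfolding top_exp_def
    using GreatestI_nat[of "\<lambda>n. 2 ^ n \<le> k" 0 k] b by blast
qed

text \<open>One-sided Thue--Morse: w_0 = 0, w_(2^n + j) = 1 - w_j for 0 \<le> j < 2^n.\<close>
function tm_nat :: "nat \<Rightarrow> nat" where
  "tm_nat k = (if k = 0 then 0 else 1 - tm_nat (k - 2 ^ top_exp k))"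
  by auto
termination
  by (relation "measure id") auto

definition tm :: "int \<Rightarrow> nat" where
  "tm k = (if k \<ge> 0 then tm_nat (nat k) else tm_nat (nat (- k - 1)))"

definition tm_language :: "nat list set" where
  "tm_language = {w. w \<noteq> [] \<and> (\<exists>k::int. \<forall>i < length w. w ! i = tm (k + int i))}"

fun blk :: "nat \<Rightarrow> nat \<Rightarrow> nat list" where
  "blk 0 i = [i]"
| "blk (Suc n) i = blk n i @ blk n (1 - i)"

end

theory Submission imports Defs begin
declare tm_nat.simps[simp del]

lemma tm_nat_le1: "tm_nat k \<le> 1"
  by (subst tm_nat.simps) auto

lemma top_exp_unique:
  assumes "2^t \<le> k" "k < 2^(Suc t)"
  shows "top_exp k = t"
proof -
  have "t \<le> top_exp k" unfolding top_exp_def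
    by (rule Greatest_le_nat[where b=k]) (use assms in \<open>auto intro: order.trans[OF less_imp_le[OF less_exp]]\<close>)
  moreover have "0 < k" using assms(1) by (metis le_less_trans zero_less_numeral zero_less_power less_le_trans)
  then have "2 ^ top_exp k \<le> k" using top_exp_props[of k] by simp
  then have "top_exp k < Suc t" using assms(2)
    by (meson le_less_trans power_less_imp_less_exp one_less_numeral_iff semiring_norm(76))
  ultimately show ?thesis by simp
qed

lemma top_exp_bounds:
  assumes "k > 0" shows "2 ^ top_exp k \<le> k \<and> k < 2 ^ Suc (top_exp k)"
proof -
  have "\<not> 2 ^ Suc (top_exp k) \<le> k"
  proof
    assume h: "2 ^ Suc (top_exp k) \<le> k"
    have "Suc (top_exp k) \<le> top_exp k" unfolding top_exp_def
      by (rule Greatest_le_nat[where b=k]) (use h in \<open>auto simp: top_exp_def intro: order.trans[OF less_imp_le[OF less_exp]]\<close>)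
    then show False by simp
  qed
  then show ?thesis using top_exp_props[OF assms] by simp
qed

lemma tm_nat_double: "tm_nat (2*k) = tm_nat k \<and> tm_nat (2*k+1) = 1 - tm_nat k"
proof (induction k rule: less_induct)
  case (less k)
  show ?case
  proof (cases "k = 0")
    case True
    have "top_exp 1 = 0" by (rule top_exp_unique) auto
    then have "tm_nat 1 = 1" by (subst tm_nat.simps) (simp add: tm_nat.simps)
    then show ?thesis using True by (simp add: tm_nat.simps)
  next
    case False
    define t where "t = top_exp k"
    have b: "2^t \<le> k" "k < 2^Suc t" using top_exp_bounds[of k] False t_def by auto
    have t1: "top_exp (2*k) = Suc t" by (rule top_exp_unique) (use b in auto)
    have t2: "top_exp (2*k+1) = Suc t" by (rule top_exp_unique) (use b in auto)
    have lt: "k - 2^t < k" using b False by simp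
    have e1: "2*k - 2^Suc t = 2*(k-2^t)" by (simp add: diff_mult_distrib2)
    have e2: "2*k + 1 - 2^Suc t = 2*(k-2^t) + 1" using b by (simp add: diff_mult_distrib2)
    have k: "tm_nat k = 1 - tm_nat (k - 2^t)" using False t_def by (subst tm_nat.simps) simp
    have "tm_nat (2*k) = 1 - tm_nat (2*k - 2^Suc t)" using False t1 by (subst tm_nat.simps) simp
    also have "\<dots> = tm_nat k" using e1 less.IH[OF lt] k by simp
    finally have A: "tm_nat (2*k) = tm_nat k" .
    have "tm_nat (2*k+1) = 1 - tm_nat (2*k+1 - 2^Suc t)" using t2 by (subst tm_nat.simps) simp
    also have "\<dots> = 1 - (1 - tm_nat (k - 2^t))" using e2 less.IH[OF lt] by simp
    also have "\<dots> = 1 - tm_nat k" using k tm_nat_le1[of "k-2^t"] by simp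
    finally show ?thesis using A by simp
  qed
qed


lemma tm_le1: "tm j \<le> 1" unfolding tm_def using tm_nat_le1 by auto

lemma tm_pair: "tm (2*j+1) = 1 - tm (2*j)"
proof (cases "j \<ge> 0")
  case True
  have "nat (2*j+1) = 2 * nat j + 1" "nat (2*j) = 2*nat j" using True by auto
  then show ?thesis using True tm_nat_double[of "nat j"] unfolding tm_def by simp
next
  case False
  have "nat (-(2*j+1)-1) = 2 * nat (-j-1)" "nat (-(2*j)-1) = 2*nat (-j-1) + 1" using False by auto
  then show ?thesis using False tm_nat_double[of "nat (-j-1)"] tm_nat_le1[of "nat (-j-1)"] unfolding tm_def by simp
qed

definition sig :: "int \<Rightarrow> nat" where "sig j = tm (2*j)"

lemma sig_eq: "sig j = (if j \<ge> 0 then tm j else 1 - tm j)"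
proof (cases "j \<ge> 0")
  case True
  have "nat (2*j) = 2*nat j" using True by auto
  then show ?thesis using True tm_nat_double[of "nat j"] unfolding sig_def tm_def by simp
next
  case False
  have "nat (-(2*j)-1) = 2*nat (-j-1) + 1" using False by auto
  then show ?thesis using False tm_nat_double[of "nat (-j-1)"] unfolding sig_def tm_def by simp
qed

lemma sig_le1: "sig j \<le> 1" unfolding sig_def using tm_le1 by simp

lemma sig_dec: "sig (2*j) = tm j"
  using sig_eq[of "2*j"] sig_eq[of j] tm_le1[of j] unfolding sig_def by (auto split: if_splits)

lemma sig_pair: "sig (2*j+1) = 1 - sig (2*j)"
  using sig_eq[of "2*j"] sig_eq[of "2*j+1"] tm_pair[of j] tm_le1[of "2*j"] tm_le1[of "2*j+1"]
  by (auto split: if_splits)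

definition P :: "(int \<Rightarrow> nat) \<Rightarrow> bool" where
  "P y = ((\<forall>j. y j \<le> 1) \<and> (\<forall>j. y (2*j+1) = 1 - y (2*j)))"

definition G :: "(int \<Rightarrow> nat) \<Rightarrow> bool" where
  "G x = (\<forall>d::nat. P (\<lambda>j. x (2^d * j)))"

lemma G_dec: "G x \<Longrightarrow> G (\<lambda>j. x (2*j))"
  unfolding G_def
proof
  fix d assume "\<forall>d. P (\<lambda>j. x (2 ^ d * j))"
  then have "P (\<lambda>j. x (2 ^ Suc d * j))" by blast
  then show "P (\<lambda>j. x (2 * (2 ^ d * j)))" by (simp add: mult.assoc)
qed

lemma tm_iter: "(\<lambda>j. tm (2^d * j)) = tm \<or> (\<lambda>j. tm (2^d * j)) = sig"
proof (induction d)
  case 0 then show ?case by simp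
next
  case (Suc d)
  have e: "\<And>j. tm (2^Suc d * j) = (\<lambda>j. tm (2^d * j)) (2*j)" by (simp add: mult.assoc mult.left_commute)
  from Suc show ?case
  proof
    assume "(\<lambda>j. tm (2^d * j)) = tm"
    then have "\<And>j. tm (2^Suc d * j) = sig j" using e unfolding sig_def by metis
    then show ?thesis by auto
  next
    assume "(\<lambda>j. tm (2^d * j)) = sig"
    then have "\<And>j. tm (2^Suc d * j) = tm j" using e sig_dec by metis
    then show ?thesis by auto
  qed
qed

lemma G_tm: "G tm"
  unfolding G_def
proof
  fix d
  have "P tm" unfolding P_def using tm_le1 tm_pair by auto
  moreover have "P sig" unfolding P_def using sig_le1 sig_pair by auto
  ultimately show "P (\<lambda>j. tm (2^d * j))" using tm_iter[of d] by auto
qed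

lemma G_facts:
  assumes "G y"
  shows "y j \<le> 1" "y (2*j+1) = 1 - y (2*j)" "y (4*j+2) = 1 - y (4*j)"
proof -
  have "P (\<lambda>j. y (2^0 * j))" "P (\<lambda>j. y (2^1 * j))" using assms unfolding G_def by blast+
  then show "y j \<le> 1" "y (2*j+1) = 1 - y (2*j)" "y (4*j+2) = 1 - y (4*j)"
    unfolding P_def by (auto simp: algebra_simps)
qed

lemma noababa:
  assumes "G y" "y m = y (m+2)" "y (m+2) = y (m+4)" "y (m+1) = y (m+3)" "y m \<noteq> y (m+1)"
  shows False
proof -
  note F = G_facts[OF assms(1)]
  define q where "q = m div 4"
  define r where "r = m mod 4"
  have qr: "m = 4*q + r" "0 \<le> r" "r < 4" unfolding q_def r_def by auto
  then have "r = 0 \<or> r = 1 \<or> r = 2 \<or> r = 3" by auto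
  then show False
  proof (elim disjE)
    assume "r = 0"
    then show False using F(1)[of m] F(3)[of q] assms qr by (simp; arith?)
  next
    assume "r = 1"
    then show False using F(1)[of "4*q"] F(1)[of m] F(2)[of "2*q"] F(2)[of "2*q+1"] F(3)[of q] assms qr
      by (simp add: algebra_simps; arith?)
  next
    assume "r = 2"
    then show False using F(1)[of m] F(3)[of "q+1"] assms qr by (simp add: algebra_simps; arith?)
  next
    assume "r = 3"
    then show False using F(1)[of "4*q+4"] F(1)[of m] F(2)[of "2*q+2"] F(2)[of "2*q+3"] F(3)[of "q+1"] assms qr
      by (simp add: algebra_simps; arith?)
  qed
qed


definition pairs :: "nat list \<Rightarrow> nat list" where
  "pairs xs = concat (map (\<lambda>b. [b, 1-b]) xs)"

lemma pairs_append: "pairs (xs @ ys) = pairs xs @ pairs ys" unfolding pairs_def by simp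

lemma blk_Suc_pairs: "blk (Suc n) i = pairs (blk n i)"
proof (induction n arbitrary: i)
  case 0 then show ?case by (simp add: pairs_def)
next
  case (Suc n)
  have "blk (Suc (Suc n)) i = blk (Suc n) i @ blk (Suc n) (1-i)" by (rule blk.simps(2))
  also have "\<dots> = pairs (blk n i) @ pairs (blk n (1-i))" using Suc.IH by simp
  also have "\<dots> = pairs (blk (Suc n) i)" by (simp only: blk.simps pairs_append)
  finally show ?case .
qed

lemma length_pairs: "length (pairs xs) = 2 * length xs"
  unfolding pairs_def by (induction xs) auto

lemma pairs_nth: "j < length xs \<Longrightarrow> pairs xs ! (2*j) = xs ! j \<and> pairs xs ! (2*j+1) = 1 - xs ! j"
proof (induction xs arbitrary: j)
  case Nil then show ?case by simp
next
  case (Cons a xs)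
  show ?case
  proof (cases j)
    case 0 then show ?thesis by (simp add: pairs_def)
  next
    case (Suc j')
    have "pairs (a # xs) = [a, 1-a] @ pairs xs" by (simp add: pairs_def)
    then show ?thesis using Cons Suc by (simp add: nth_append)
  qed
qed

lemma length_blk: "length (blk n i) = 2^n"
  by (induction n arbitrary: i) auto

lemma blk_nth0: "blk n i ! 0 = i"
proof (induction n arbitrary: i)
  case 0 then show ?case by simp
next
  case (Suc n) then show ?case by (simp add: nth_append length_blk)
qed

definition occ :: "nat list \<Rightarrow> (int \<Rightarrow> nat) \<Rightarrow> int \<Rightarrow> bool" where
  "occ xs x k = (\<forall>t<length xs. xs ! t = x (k + int t))"

lemma occ_pairs:
  assumes "occ (pairs xs) x k" "j < length xs"
  shows "x (k + 2*int j) = xs ! j \<and> x (k + 2*int j + 1) = 1 - xs ! j"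
proof -
  have "2*j < length (pairs xs)" "2*j+1 < length (pairs xs)" using assms(2) length_pairs[of xs] by auto
  then have "pairs xs ! (2*j) = x (k + int (2*j))" "pairs xs ! (2*j+1) = x (k + int (2*j+1))"
    using assms(1) unfolding occ_def by blast+
  then show ?thesis using pairs_nth[OF assms(2)] by (simp add: ac_simps)
qed

lemma odd_contra:
  assumes "G x" "occ (pairs xs) x k" "odd k" "length xs \<ge> 3"
  shows False
proof -
  obtain p where p: "k = 2*p+1" using assms(3) by (metis oddE)
  note F = G_facts[OF assms(1)]
  have a: "x k = xs!0 \<and> x (k+1) = 1 - xs!0" using occ_pairs[OF assms(2), of 0] assms(4) by fastforce
  have b: "x (k+2) = xs!1 \<and> x (k+3) = 1 - xs!1" using occ_pairs[OF assms(2), of 1] assms(4) by (simp add: ac_simps)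
  have c: "x (k+4) = xs!2" using occ_pairs[OF assms(2), of 2] assms(4) by (simp add: ac_simps)
  have g1: "x (k+2) = 1 - x (k+1)" using F(2)[of "p+1"] p by (simp add: algebra_simps)
  have g2: "x (k+4) = 1 - x (k+3)" using F(2)[of "p+2"] p by (simp add: algebra_simps)
  have bd: "x k \<le> 1" "x (k+2) \<le> 1" "x (k+4) \<le> 1" using F(1) by auto
  show False
    by (rule noababa[OF assms(1), of k]) (use a b c g1 g2 bd in arith)+
qed

lemma even_dec:
  assumes "occ (pairs xs) x (2*p)"
  shows "occ xs (\<lambda>j. x (2*j)) p"
  unfolding occ_def
proof (intro allI impI)
  fix t assume "t < length xs"
  then show "xs ! t = x (2 * (p + int t))" using occ_pairs[OF assms, of t] by (simp add: algebra_simps)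
qed

lemma base:
  assumes "G y" "occ [i1,i2,i3,i4,i5] y p"
  shows "(i1 \<noteq> i2 \<and> i3 \<noteq> i4) \<noteq> (i2 \<noteq> i3 \<and> i4 \<noteq> i5)"
proof -
  have v: "y p = i1" "y (p+1) = i2" "y (p+2) = i3" "y (p+3) = i4" "y (p+4) = i5"
    using assms(2) unfolding occ_def
    by (auto dest: spec[of _ 0] spec[of _ 1] spec[of _ 2] spec[of _ 3] spec[of _ 4])
  note F = G_facts[OF assms(1)]
  have bd: "y p \<le> 1" "y (p+1) \<le> 1" "y (p+2) \<le> 1" "y (p+3) \<le> 1" "y (p+4) \<le> 1" using F(1) by auto
  show ?thesis
  proof (cases "even p")
    case True
    then obtain q where q: "p = 2*q" by (metis evenE)
    have "y (p+1) = 1 - y p" "y (p+3) = 1 - y (p+2)" using F(2)[of q] F(2)[of "q+1"] q by (simp_all add: algebra_simps)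
    moreover have "\<not> (i2 \<noteq> i3 \<and> i4 \<noteq> i5)"
    proof
      assume h: "i2 \<noteq> i3 \<and> i4 \<noteq> i5"
      show False
        by (rule noababa[OF assms(1), of p]) (use h v bd calculation in arith)+
    qed
    moreover have "i1 \<noteq> i2 \<and> i3 \<noteq> i4" using v bd calculation by arith
    ultimately show ?thesis by blast
  next
    case False
    then obtain q where q: "p = 2*q+1" by (metis oddE)
    have "y (p+2) = 1 - y (p+1)" "y (p+4) = 1 - y (p+3)" using F(2)[of "q+1"] F(2)[of "q+2"] q by (simp_all add: algebra_simps)
    moreover have "\<not> (i1 \<noteq> i2 \<and> i3 \<noteq> i4)"
    proof
      assume h: "i1 \<noteq> i2 \<and> i3 \<noteq> i4"
      show False
        by (rule noababa[OF assms(1), of p]) (use h v bd calculation in arith)+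
    qed
    moreover have "i2 \<noteq> i3 \<and> i4 \<noteq> i5" using v bd calculation by arith
    ultimately show ?thesis by blast
  qed
qed

lemma main:
  "G x \<Longrightarrow> occ (pairs (blk m i1 @ blk m i2 @ blk m i3 @ blk m i4 @ blk m i5)) x k \<Longrightarrow>
   (i1 \<noteq> i2 \<and> i3 \<noteq> i4) \<noteq> (i2 \<noteq> i3 \<and> i4 \<noteq> i5)"
proof (induction m arbitrary: x k)
  case (0 x k)
  show ?case
  proof (cases "odd k")
    case True
    have False by (rule odd_contra[OF 0(1) 0(2) True]) simp
    then show ?thesis ..
  next
    case False
    then obtain p where p: "k = 2*p" by (metis evenE)
    have "occ [i1,i2,i3,i4,i5] (\<lambda>j. x (2*j)) p" using even_dec[of _ x p] 0(2) p by simp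
    then show ?thesis by (rule base[OF G_dec[OF 0(1)]])
  qed
next
  case (Suc m x k)
  show ?case
  proof (cases "odd k")
    case True
    have pos: "(1::nat) \<le> 2 ^ Suc m" by simp
    have False by (rule odd_contra[OF Suc(2) Suc(3) True]) (use pos in \<open>simp only: length_append length_blk\<close>)
    then show ?thesis ..
  next
    case False
    then obtain p where p: "k = 2*p" by (metis evenE)
    have "occ (pairs (blk m i1 @ blk m i2 @ blk m i3 @ blk m i4 @ blk m i5)) (\<lambda>j. x (2*j)) p"
    proof -
      have "pairs (blk (Suc m) i1 @ blk (Suc m) i2 @ blk (Suc m) i3 @ blk (Suc m) i4 @ blk (Suc m) i5)
         = pairs (pairs (blk m i1 @ blk m i2 @ blk m i3 @ blk m i4 @ blk m i5))"
        by (simp only: blk_Suc_pairs pairs_append)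
      then show ?thesis using even_dec[of _ x p] Suc(3) p by simp
    qed
    then show ?thesis using Suc.IH[OF G_dec[OF Suc(2)]] by blast
  qed
qed

lemma app_same: "length a = length c \<Longrightarrow> (a @ b = c @ d) \<longleftrightarrow> a = c \<and> b = d" by simp

lemma blk_inj: "blk n a = blk n b \<longleftrightarrow> a = b"
  by (metis blk_nth0)

theorem lemma3p4:
  fixes n i1 i2 i3 i4 i5 :: nat and \<alpha> :: "nat list"
  assumes "n > 0"
    and "i1 \<in> {0,1}" "i2 \<in> {0,1}" "i3 \<in> {0,1}" "i4 \<in> {0,1}" "i5 \<in> {0,1}"
    and "\<alpha> = blk n i1 @ blk n i2 @ blk n i3 @ blk n i4 @ blk n i5"
    and "\<alpha> \<in> tm_language"
  shows "(\<alpha> = blk (Suc n) i1 @ blk (Suc n) i3 @ blk n i5) \<noteq>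
         (\<alpha> = blk n i1 @ blk (Suc n) i2 @ blk (Suc n) i4)"
proof -
  obtain m where m: "n = Suc m" using assms(1) by (metis gr0_implies_Suc)
  obtain k where k: "\<forall>i < length \<alpha>. \<alpha> ! i = tm (k + int i)" using assms(8) unfolding tm_language_def by blast
  have eq: "pairs (blk m i1 @ blk m i2 @ blk m i3 @ blk m i4 @ blk m i5) = \<alpha>"
    using assms(7) m by (simp only: blk_Suc_pairs pairs_append)
  have "occ (pairs (blk m i1 @ blk m i2 @ blk m i3 @ blk m i4 @ blk m i5)) tm k"
    using k unfolding occ_def eq by blast
  from main[OF G_tm this]
  have M: "(i1 \<noteq> i2 \<and> i3 \<noteq> i4) \<noteq> (i2 \<noteq> i3 \<and> i4 \<noteq> i5)" .
  have f1: "(\<alpha> = blk (Suc n) i1 @ blk (Suc n) i3 @ blk n i5) \<longleftrightarrow> (i2 = 1 - i1 \<and> i4 = 1 - i3)"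
    using assms(7) by (simp add: app_same length_blk blk_inj)
  have f2: "(\<alpha> = blk n i1 @ blk (Suc n) i2 @ blk (Suc n) i4) \<longleftrightarrow> (i3 = 1 - i2 \<and> i5 = 1 - i4)"
    using assms(7) by (simp add: app_same length_blk blk_inj)
  show ?thesis unfolding f1 f2 using M assms(2-6) by auto
qed

end
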